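(* Let $f,g\in C[0,1]$. Then $$\underline{\dim}_B G(f\cdot g)\le \max\{\underline{\dim}_B G(f),\ \overline{\dim}_B G(g)\}.$$
   Context: $C[0,1]$ is the space of real-valued continuous functions on $[0,1]$; $G(f)=\{(x,f(x)):x\in[0,1]\}\subset\mathbb{R}^2$ is the graph of $f$; $f\cdot g$ is the pointwise product. For a nonempty bounded set $F$, $N_\delta(F)$ is the smallest number of sets of diameter at most $\delta$ covering $F$, $\overline{\dim}_B F=\limsup_{\delta\to0}\frac{\log N_\delta(F)}{-\log\delta}$ and $\underline{\dim}_B F=\liminf_{\delta\to0}\frac{\log N_\delta(F)}{-\log\delta}$. *)

theory Defs
  imports "HOL-Analysis.Analysis" "HOL-Library.Extended_Real"
begin

definition graph01 :: "(real \<Rightarrow> real) \<Rightarrow> (real \<times> real) set" where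
  "graph01 f = {(x, f x) | x. x \<in> {0..1}}"

definition cover_num :: "real \<Rightarrow> 'a::metric_space set \<Rightarrow> nat" where
  "cover_num \<delta> F = (LEAST n. \<exists>U :: nat \<Rightarrow> 'a set.
      F \<subseteq> (\<Union>i<n. U i) \<and> (\<forall>i<n. \<forall>x\<in>U i. \<forall>y\<in>U i. dist x y \<le> \<delta>))"

definition upper_box_dim :: "'a::metric_space set \<Rightarrow> ereal" where
  "upper_box_dim F = Limsup (at_right 0) (\<lambda>\<delta>. ereal (ln (real (cover_num \<delta> F)) / - ln \<delta>))"

definition lower_box_dim :: "'a::metric_space set \<Rightarrow> ereal" where
  "lower_box_dim F = Liminf (at_right 0) (\<lambda>\<delta>. ereal (ln (real (cover_num \<delta> F)) / - ln \<delta>))"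

end

theory Submission
  imports Defs
begin
definition cov :: "real \<Rightarrow> 'a::metric_space set \<Rightarrow> nat \<Rightarrow> bool" where
  "cov \<delta> F n \<longleftrightarrow> (\<exists>U :: nat \<Rightarrow> 'a set.
      F \<subseteq> (\<Union>i<n. U i) \<and> (\<forall>i<n. \<forall>x\<in>U i. \<forall>y\<in>U i. dist x y \<le> \<delta>))"

lemma cover_num_cov: "cover_num \<delta> F = (LEAST n. cov \<delta> F n)"
  unfolding cover_num_def cov_def by simp

lemma cover_num_le: "cov \<delta> F n \<Longrightarrow> cover_num \<delta> F \<le> n"
  unfolding cover_num_cov by (rule Least_le)

lemma cov_cover_num: "cov \<delta> F n \<Longrightarrow> cov \<delta> F (cover_num \<delta> F)"
  unfolding cover_num_cov by (rule LeastI)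

lemma cover_num_pos: "cov \<delta> F n \<Longrightarrow> F \<noteq> {} \<Longrightarrow> cover_num \<delta> F \<ge> 1"
  using cov_cover_num[of \<delta> F n] unfolding cov_def
  by (metis bot.extremum_uniqueI emptyE lessThan_0 less_one not_le UN_empty)

lemma cov_mono: "cov \<delta> B n \<Longrightarrow> A \<subseteq> B \<Longrightarrow> cov \<delta> A n"
  unfolding cov_def by blast

lemma cov_union: assumes "cov \<delta> A a" "cov \<delta> B b" shows "cov \<delta> (A \<union> B) (a + b)"
proof -
  obtain U where U: "A \<subseteq> (\<Union>i<a. U i)" "\<forall>i<a. \<forall>x\<in>U i. \<forall>y\<in>U i. dist x y \<le> \<delta>"
    using assms(1) unfolding cov_def by blast
  obtain V where V: "B \<subseteq> (\<Union>i<b. V i)" "\<forall>i<b. \<forall>x\<in>V i. \<forall>y\<in>V i. dist x y \<le> \<delta>"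
    using assms(2) unfolding cov_def by blast
  define W where "W i = (if i < a then U i else V (i - a))" for i
  have "A \<union> B \<subseteq> (\<Union>i<a+b. W i)"
  proof
    fix z assume "z \<in> A \<union> B"
    then show "z \<in> (\<Union>i<a+b. W i)"
    proof
      assume "z \<in> A" then obtain i where "i < a" "z \<in> U i" using U by blast
      then show ?thesis unfolding W_def by (intro UN_I[of i]) auto
    next
      assume "z \<in> B" then obtain i where "i < b" "z \<in> V i" using V by blast
      then show ?thesis unfolding W_def by (intro UN_I[of "i + a"]) auto
    qed
  qed
  moreover have "\<forall>i<a+b. \<forall>x\<in>W i. \<forall>y\<in>W i. dist x y \<le> \<delta>"
  proof (intro allI impI)
    fix i assume "i < a + b"
    then show "\<forall>x\<in>W i. \<forall>y\<in>W i. dist x y \<le> \<delta>"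
    proof (cases "i < a")
      case True then show ?thesis using U(2) unfolding W_def by auto
    next
      case False
      then have "i - a < b" using \<open>i < a + b\<close> by linarith
      then show ?thesis using V(2) False unfolding W_def by auto
    qed
  qed
  ultimately show ?thesis unfolding cov_def by blast
qed

lemma cov_empty: "cov \<delta> {} 0" unfolding cov_def by auto

lemma cov_UN: fixes m :: nat shows "(\<And>k. k < m \<Longrightarrow> cov \<delta> (S k) (c k)) \<Longrightarrow> cov \<delta> (\<Union>k<m. S k) (\<Sum>k<m. c k)"
proof (induction m)
  case 0 then show ?case by (simp add: cov_empty)
next
  case (Suc m)
  have "(\<Union>k<Suc m. S k) = (\<Union>k<m. S k) \<union> S m" by (auto simp: lessThan_Suc)
  then show ?case using cov_union[of \<delta> "\<Union>k<m. S k" "\<Sum>k<m. c k" "S m" "c m"] Suc by simp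
qed

lemma cov_rect:
  fixes x0 y0 w L :: real
  assumes "0 < w" "0 \<le> L" "2 * w \<le> \<delta>"
  shows "cov \<delta> ({x0..x0+w} \<times> {y0..y0+L}) (nat \<lfloor>L / w\<rfloor> + 1)"
proof -
  define U where "U j = {x0..x0+w} \<times> {y0 + real j * w .. y0 + (real j + 1) * w}" for j :: nat
  have "{x0..x0+w} \<times> {y0..y0+L} \<subseteq> (\<Union>j<nat \<lfloor>L / w\<rfloor> + 1. U j)"
  proof safe
    fix a b assume a: "a \<in> {x0..x0+w}" and b: "b \<in> {y0..y0+L}"
    define j where "j = nat \<lfloor>(b - y0) / w\<rfloor>"
    have q: "0 \<le> (b - y0) / w" using b assms by auto
    have "\<lfloor>(b - y0) / w\<rfloor> \<le> \<lfloor>L / w\<rfloor>"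
      using b assms by (intro floor_mono divide_right_mono) auto
    then have "j < nat \<lfloor>L / w\<rfloor> + 1" unfolding j_def by linarith
    moreover have "real j \<le> (b - y0) / w" "(b - y0) / w < real j + 1"
      unfolding j_def using q by linarith+
    then have "y0 + real j * w \<le> b" "b \<le> y0 + (real j + 1) * w"
      using assms(1) by (simp_all add: field_simps)
    ultimately show "(a, b) \<in> (\<Union>j<nat \<lfloor>L / w\<rfloor> + 1. U j)" using a unfolding U_def by auto
  qed
  moreover have "\<forall>i. \<forall>x\<in>U i. \<forall>y\<in>U i. dist x y \<le> \<delta>"
  proof (intro allI ballI)
    fix i x y assume "x \<in> U i" "y \<in> U i"
    then have h: "\<bar>fst x - fst y\<bar> \<le> w" "\<bar>snd x - snd y\<bar> \<le> w"
      unfolding U_def by (auto simp: mem_Times_iff abs_le_iff algebra_simps)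
    have "dist x y = sqrt ((dist (fst x) (fst y))\<^sup>2 + (dist (snd x) (snd y))\<^sup>2)"
      by (metis dist_Pair_Pair prod.collapse)
    also have "\<dots> \<le> \<bar>dist (fst x) (fst y)\<bar> + \<bar>dist (snd x) (snd y)\<bar>"
      by (rule sqrt_sum_squares_le_sum_abs)
    also have "\<dots> \<le> \<delta>" using h assms by (simp add: dist_real_def)
    finally show "dist x y \<le> \<delta>" .
  qed
  ultimately show ?thesis unfolding cov_def by blast
qed



definition col :: "real \<Rightarrow> nat \<Rightarrow> real set" where
  "col w k = {real k * w .. (real k + 1) * w} \<inter> {0..1}"
definition lo :: "(real \<Rightarrow> real) \<Rightarrow> real \<Rightarrow> nat \<Rightarrow> real" where
  "lo \<phi> w k = Inf (\<phi> ` col w k)"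
definition hi :: "(real \<Rightarrow> real) \<Rightarrow> real \<Rightarrow> nat \<Rightarrow> real" where
  "hi \<phi> w k = Sup (\<phi> ` col w k)"

lemma col_basic:
  assumes "0 < w" "k < nat \<lceil>1 / w\<rceil>"
  shows "compact (col w k)" "col w k \<noteq> {}" "col w k \<subseteq> {0..1}" "connected (col w k)"
proof -
  have "int k < \<lceil>1 / w\<rceil>" using assms(2) by linarith
  then have "real k < 1 / w" by (simp add: less_ceiling_iff)
  then have "real k * w < 1" using assms(1) by (simp add: field_simps)
  then have "real k * w \<in> col w k" unfolding col_def using assms(1) by auto
  then show "col w k \<noteq> {}" by auto
  show "compact (col w k)" unfolding col_def by (intro compact_Int_closed) auto
  show "col w k \<subseteq> {0..1}" unfolding col_def by auto
  show "connected (col w k)" unfolding col_def by (simp add: Int_atLeastAtMost)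
qed

lemma col_cover:
  assumes "0 < w" "x \<in> {0..1}"
  shows "\<exists>k<nat \<lceil>1 / w\<rceil>. x \<in> col w k"
proof -
  define m where "m = nat \<lceil>1 / w\<rceil>"
  have "0 < 1 / w" using assms(1) by simp
  then have "0 < \<lceil>1 / w\<rceil>" by simp
  then have m1: "m \<ge> 1" unfolding m_def by linarith
  have xw: "0 \<le> x / w" using assms by auto
  show ?thesis
  proof (cases "nat \<lfloor>x / w\<rfloor> < m")
    case True
    have "real (nat \<lfloor>x / w\<rfloor>) \<le> x / w" "x / w < real (nat \<lfloor>x / w\<rfloor>) + 1" using xw by linarith+
    then have "real (nat \<lfloor>x / w\<rfloor>) * w \<le> x" "x \<le> (real (nat \<lfloor>x / w\<rfloor>) + 1) * w"
      using assms(1) by (simp_all add: field_simps)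
    then show ?thesis using True assms(2) unfolding col_def m_def[symmetric]
      by (intro exI[of _ "nat \<lfloor>x / w\<rfloor>"]) auto
  next
    case False
    then have "real m \<le> real (nat \<lfloor>x / w\<rfloor>)" by simp
    moreover have "real (nat \<lfloor>x / w\<rfloor>) \<le> x / w" using xw by linarith
    ultimately have "real m \<le> x / w" by linarith
    moreover have "1 / w \<le> real m" unfolding m_def by linarith
    ultimately have "1 \<le> x" using assms(1) by (simp add: field_simps)
    then have x1: "x = 1" using assms(2) by auto
    have "int (m - 1) < \<lceil>1 / w\<rceil>" using m1 unfolding m_def by linarith
    then have "real (m - 1) < 1 / w" by (simp add: less_ceiling_iff)
    then have "real (m - 1) * w \<le> 1" using assms(1) by (simp add: field_simps)
    moreover have "1 \<le> (real (m - 1) + 1) * w" using \<open>1 / w \<le> real m\<close> m1 assms(1)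
      by (simp add: field_simps of_nat_diff)
    ultimately show ?thesis using x1 m1 unfolding col_def m_def[symmetric]
      by (intro exI[of _ "m - 1"]) auto
  qed
qed

lemma lohi:
  assumes "continuous_on {0..1} \<phi>" "0 < w" "k < nat \<lceil>1 / w\<rceil>"
  shows "\<exists>x\<in>col w k. \<phi> x = lo \<phi> w k" "\<exists>x\<in>col w k. \<phi> x = hi \<phi> w k"
    "\<And>x. x \<in> col w k \<Longrightarrow> lo \<phi> w k \<le> \<phi> x \<and> \<phi> x \<le> hi \<phi> w k"
    "\<And>y. lo \<phi> w k \<le> y \<Longrightarrow> y \<le> hi \<phi> w k \<Longrightarrow> \<exists>x\<in>col w k. \<phi> x = y"
proof -
  note cb = col_basic[OF assms(2,3)]
  have c: "continuous_on (col w k) \<phi>" using assms(1) cb(3) continuous_on_subset by blast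
  obtain a where a: "a \<in> col w k" "\<forall>y\<in>col w k. \<phi> a \<le> \<phi> y"
    using continuous_attains_inf[OF cb(1,2) c] by blast
  obtain b where b: "b \<in> col w k" "\<forall>y\<in>col w k. \<phi> y \<le> \<phi> b"
    using continuous_attains_sup[OF cb(1,2) c] by blast
  have la: "lo \<phi> w k = \<phi> a" unfolding lo_def using a by (intro cInf_eq_minimum) auto
  have hb: "hi \<phi> w k = \<phi> b" unfolding hi_def using b by (intro cSup_eq_maximum) auto
  show "\<exists>x\<in>col w k. \<phi> x = lo \<phi> w k" using a la by auto
  show "\<exists>x\<in>col w k. \<phi> x = hi \<phi> w k" using b hb by auto
  show "\<And>x. x \<in> col w k \<Longrightarrow> lo \<phi> w k \<le> \<phi> x \<and> \<phi> x \<le> hi \<phi> w k" using a b la hb by auto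
  have conn: "connected (\<phi> ` col w k)" using connected_continuous_image[OF c cb(4)] .
  show "\<And>y. lo \<phi> w k \<le> y \<Longrightarrow> y \<le> hi \<phi> w k \<Longrightarrow> \<exists>x\<in>col w k. \<phi> x = y"
  proof -
    fix y assume "lo \<phi> w k \<le> y" "y \<le> hi \<phi> w k"
    then have "y \<in> \<phi> ` col w k"
      using connectedD_interval[OF conn, of "\<phi> a" "\<phi> b" y] a b la hb by auto
    then show "\<exists>x\<in>col w k. \<phi> x = y" by auto
  qed
qed

lemma upper_cov:
  assumes "continuous_on {0..1} \<phi>" "0 < w" "2 * w \<le> \<delta>"
  shows "cov \<delta> (graph01 \<phi>) (\<Sum>k<nat \<lceil>1 / w\<rceil>. nat \<lfloor>(hi \<phi> w k - lo \<phi> w k) / w\<rfloor> + 1)"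
proof -
  define m where "m = nat \<lceil>1 / w\<rceil>"
  define R where "R k = {real k * w .. real k * w + w} \<times> {lo \<phi> w k .. lo \<phi> w k + (hi \<phi> w k - lo \<phi> w k)}" for k
  have "graph01 \<phi> \<subseteq> (\<Union>k<m. R k)"
  proof
    fix p assume "p \<in> graph01 \<phi>"
    then obtain x where x: "p = (x, \<phi> x)" "x \<in> {0..1}" unfolding graph01_def by auto
    obtain k where k: "k < m" "x \<in> col w k" using col_cover[OF assms(2) x(2)] unfolding m_def by auto
    have "lo \<phi> w k \<le> \<phi> x \<and> \<phi> x \<le> hi \<phi> w k" using lohi(3)[OF assms(1,2) k(1)[unfolded m_def] k(2)] .
    then have "p \<in> R k" using k(2) x(1) unfolding R_def col_def by (auto simp: algebra_simps)
    then show "p \<in> (\<Union>k<m. R k)" using k by auto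
  qed
  moreover have "cov \<delta> (\<Union>k<m. R k) (\<Sum>k<m. nat \<lfloor>(hi \<phi> w k - lo \<phi> w k) / w\<rfloor> + 1)"
  proof (rule cov_UN)
    fix k assume "k < m"
    obtain a where "a \<in> col w k" "\<phi> a = lo \<phi> w k" using lohi(1)[OF assms(1,2) \<open>k<m\<close>[unfolded m_def]] by auto
    then have "0 \<le> hi \<phi> w k - lo \<phi> w k" using lohi(3)[OF assms(1,2) \<open>k<m\<close>[unfolded m_def]] by force
    then show "cov \<delta> (R k) (nat \<lfloor>(hi \<phi> w k - lo \<phi> w k) / w\<rfloor> + 1)"
      unfolding R_def by (intro cov_rect assms)
  qed
  ultimately show ?thesis unfolding m_def by (rule cov_mono[rotated])
qed



lemma modsep: "(k::nat) mod 4 = r \<Longrightarrow> k' mod 4 = r \<Longrightarrow> k \<noteq> k' \<Longrightarrow> k + 4 \<le> k' \<or> k' + 4 \<le> k"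
proof -
  assume a: "k mod 4 = r" "k' mod 4 = r" "k \<noteq> k'"
  have e1: "k = 4 * (k div 4) + r" using a(1) by (metis div_mult_mod_eq mult.commute)
  have e2: "k' = 4 * (k' div 4) + r" using a(2) by (metis div_mult_mod_eq mult.commute)
  have "k div 4 \<noteq> k' div 4" using e1 e2 a(3) by metis
  then have "k div 4 + 1 \<le> k' div 4 \<or> k' div 4 + 1 \<le> k div 4" by linarith
  then show ?thesis using e1 e2 by linarith
qed

lemma lower_cov:
  assumes "continuous_on {0..1} \<phi>" "0 < w" "\<delta> < 3 * w" "cov \<delta> (graph01 \<phi>) n"
  shows "(\<Sum>k\<in>{k. k < nat \<lceil>1 / w\<rceil> \<and> k mod 4 = r}. nat \<lfloor>(hi \<phi> w k - lo \<phi> w k) / (4 * w)\<rfloor> + 1) \<le> n"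
proof -
  define m where "m = nat \<lceil>1 / w\<rceil>"
  obtain U where U: "graph01 \<phi> \<subseteq> (\<Union>i<n. U i)" "\<forall>i<n. \<forall>x\<in>U i. \<forall>y\<in>U i. dist x y \<le> \<delta>"
    using assms(4) unfolding cov_def by blast
  define K where "K = {k. k < m \<and> k mod 4 = r}"
  define J where "J k = {..nat \<lfloor>(hi \<phi> w k - lo \<phi> w k) / (4 * w)\<rfloor>}" for k
  define T where "T = Sigma K J"
  define xp where "xp p = (SOME x. x \<in> col w (fst p) \<and> \<phi> x = lo \<phi> w (fst p) + real (snd p) * (4 * w))" for p
  have xp: "xp p \<in> col w (fst p) \<and> \<phi> (xp p) = lo \<phi> w (fst p) + real (snd p) * (4 * w)" if pT0: "p \<in> T" for p
  proof -
    obtain k j where p: "p = (k, j)" "k < m" "j \<le> nat \<lfloor>(hi \<phi> w k - lo \<phi> w k) / (4 * w)\<rfloor>"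
      using pT0 unfolding T_def K_def J_def by (cases p) auto
    obtain a where a: "a \<in> col w k" "\<phi> a = lo \<phi> w k" using lohi(1)[OF assms(1,2) p(2)[unfolded m_def]] by auto
    then have "lo \<phi> w k \<le> \<phi> a \<and> \<phi> a \<le> hi \<phi> w k" using lohi(3)[OF assms(1,2) p(2)[unfolded m_def]] by blast
    then have "0 \<le> hi \<phi> w k - lo \<phi> w k" by linarith
    then have "0 \<le> (hi \<phi> w k - lo \<phi> w k) / (4 * w)" using assms(2) by simp
    then have "real j \<le> (hi \<phi> w k - lo \<phi> w k) / (4 * w)" using p(3) by linarith
    then have "real j * (4 * w) \<le> hi \<phi> w k - lo \<phi> w k" using assms(2) by (simp add: field_simps)
    then have "\<exists>x\<in>col w k. \<phi> x = lo \<phi> w k + real j * (4 * w)"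
      using assms(2) by (intro lohi(4)[OF assms(1,2) p(2)[unfolded m_def]]) auto
    then show ?thesis unfolding xp_def p(1) fst_conv snd_conv by (rule someI2_bex) auto
  qed
  define ip where "ip p = (SOME i. i < n \<and> (xp p, \<phi> (xp p)) \<in> U i)" for p
  have ip: "ip p < n \<and> (xp p, \<phi> (xp p)) \<in> U (ip p)" if "p \<in> T" for p
  proof -
    have "fst p < m" using that unfolding T_def K_def by auto
    then have "xp p \<in> {0..1}" using xp[OF that] col_basic(3)[OF assms(2), of "fst p"] unfolding m_def by auto
    then have "(xp p, \<phi> (xp p)) \<in> graph01 \<phi>" unfolding graph01_def by auto
    then have "\<exists>i. i < n \<and> (xp p, \<phi> (xp p)) \<in> U i" using U(1) by auto
    then show ?thesis unfolding ip_def by (rule someI_ex)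
  qed
  have "inj_on ip T"
  proof (rule inj_onI)
    fix p q assume pT: "p \<in> T" and qT: "q \<in> T" and e: "ip p = ip q"
    have d: "dist (xp p, \<phi> (xp p)) (xp q, \<phi> (xp q)) \<le> \<delta>"
    proof -
      have "ip p < n" using ip[OF pT] by blast
      moreover have "(xp p, \<phi> (xp p)) \<in> U (ip p)" using ip[OF pT] by blast
      moreover have "(xp q, \<phi> (xp q)) \<in> U (ip p)" using ip[OF qT] e by simp
      ultimately show ?thesis using U(2) by blast
    qed
    have dx: "\<bar>xp p - xp q\<bar> \<le> \<delta>"
      using d dist_fst_le[of "(xp p, \<phi> (xp p))" "(xp q, \<phi> (xp q))"] by (simp add: dist_real_def)
    have dy: "\<bar>\<phi> (xp p) - \<phi> (xp q)\<bar> \<le> \<delta>"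
      using d dist_snd_le[of "(xp p, \<phi> (xp p))" "(xp q, \<phi> (xp q))"] by (simp add: dist_real_def)
    obtain k j where p: "p = (k, j)" "k mod 4 = r" using pT unfolding T_def K_def by (cases p) auto
    obtain k' j' where q: "q = (k', j')" "k' mod 4 = r" using qT unfolding T_def K_def by (cases q) auto
    have xk: "real k * w \<le> xp p" "xp p \<le> (real k + 1) * w" using xp[OF pT] p unfolding col_def by auto
    have xk': "real k' * w \<le> xp q" "xp q \<le> (real k' + 1) * w" using xp[OF qT] q unfolding col_def by auto
    have kk: "k = k'"
    proof (rule ccontr)
      assume "k \<noteq> k'"
      then have "k + 4 \<le> k' \<or> k' + 4 \<le> k" using p(2) q(2) modsep by blast
      then have "real k + 4 \<le> real k' \<or> real k' + 4 \<le> real k" by linarith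
      then have "(real k + 4) * w \<le> real k' * w \<or> (real k' + 4) * w \<le> real k * w"
        using assms(2) mult_right_mono[of _ _ w] by auto
      then have "real k * w + 4 * w \<le> real k' * w \<or> real k' * w + 4 * w \<le> real k * w"
        by (simp add: algebra_simps)
      then show False
      proof
        assume "real k * w + 4 * w \<le> real k' * w"
        then have "3 * w \<le> xp q - xp p" using xk(2) xk'(1) by (simp add: algebra_simps)
        then show False using dx assms(3) by linarith
      next
        assume "real k' * w + 4 * w \<le> real k * w"
        then have "3 * w \<le> xp p - xp q" using xk(1) xk'(2) by (simp add: algebra_simps)
        then show False using dx assms(3) by linarith
      qed
    qed
    have "\<phi> (xp p) - \<phi> (xp q) = (real j - real j') * (4 * w)"
    proof -
      have e1: "\<phi> (xp p) = lo \<phi> w k + real j * (4 * w)" using xp[OF pT] unfolding p(1) by simp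
      have e2: "\<phi> (xp q) = lo \<phi> w k + real j' * (4 * w)" using xp[OF qT] unfolding q(1) kk by simp
      show ?thesis unfolding e1 e2 by (simp add: left_diff_distrib)
    qed
    have jj: "j = j'"
    proof (rule ccontr)
      assume "j \<noteq> j'"
      then have "1 \<le> \<bar>real j - real j'\<bar>" by linarith
      then have "4 * w \<le> \<bar>real j - real j'\<bar> * (4 * w)" using assms(2) by simp
      also have "\<dots> = \<bar>\<phi> (xp p) - \<phi> (xp q)\<bar>"
        using \<open>\<phi> (xp p) - \<phi> (xp q) = _\<close> assms(2) by (simp add: abs_mult)
      finally show False using dy assms(2,3) by linarith
    qed
    show "p = q" using p q kk jj by simp
  qed
  moreover have "ip ` T \<subseteq> {..<n}" using ip by auto
  ultimately have "card T \<le> n" using card_inj_on_le[of ip T "{..<n}"] by simp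
  moreover have "finite K" unfolding K_def by auto
  then have "card T = (\<Sum>k\<in>K. card (J k))" unfolding T_def by (simp add: card_SigmaI J_def)
  ultimately show ?thesis unfolding K_def J_def m_def by simp
qed

lemma lower_cov4:
  assumes "continuous_on {0..1} \<phi>" "0 < w" "\<delta> < 3 * w" "cov \<delta> (graph01 \<phi>) n"
  shows "(\<Sum>k<nat \<lceil>1 / w\<rceil>. nat \<lfloor>(hi \<phi> w k - lo \<phi> w k) / (4 * w)\<rfloor> + 1) \<le> 4 * n"
proof -
  let ?a = "\<lambda>k. nat \<lfloor>(hi \<phi> w k - lo \<phi> w k) / (4 * w)\<rfloor> + 1"
  have "(\<Sum>k<nat \<lceil>1 / w\<rceil>. ?a k) = (\<Sum>r<4. sum ?a {k \<in> {..<nat \<lceil>1 / w\<rceil>}. k mod 4 = r})"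
    by (rule sum.group[symmetric]) auto
  also have "\<dots> \<le> (\<Sum>r<(4::nat). n)"
  proof (rule sum_mono)
    fix r :: nat
    have "{k \<in> {..<nat \<lceil>1 / w\<rceil>}. k mod 4 = r} = {k. k < nat \<lceil>1 / w\<rceil> \<and> k mod 4 = r}" by auto
    then show "sum ?a {k \<in> {..<nat \<lceil>1 / w\<rceil>}. k mod 4 = r} \<le> n"
      using lower_cov[OF assms] by simp
  qed
  finally show ?thesis by simp
qed



lemma osc_nonneg:
  assumes "continuous_on {0..1} \<phi>" "0 < w" "k < nat \<lceil>1 / w\<rceil>"
  shows "0 \<le> hi \<phi> w k - lo \<phi> w k"
proof -
  obtain a where a: "a \<in> col w k" "\<phi> a = lo \<phi> w k" using lohi(1)[OF assms] by auto
  then have "lo \<phi> w k \<le> \<phi> a \<and> \<phi> a \<le> hi \<phi> w k" using lohi(3)[OF assms] by blast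
  then show ?thesis by linarith
qed

lemma osc_prod:
  assumes f: "continuous_on {0..1} f" and g: "continuous_on {0..1} g" and "0 < w" "k < nat \<lceil>1 / w\<rceil>"
    and Mf: "\<forall>x\<in>{0..1}. \<bar>f x\<bar> \<le> M" and Mg: "\<forall>x\<in>{0..1}. \<bar>g x\<bar> \<le> M"
  shows "hi (\<lambda>x. f x * g x) w k - lo (\<lambda>x. f x * g x) w k
         \<le> M * (hi f w k - lo f w k) + M * (hi g w k - lo g w k)"
proof -
  let ?h = "\<lambda>x. f x * g x"
  have h: "continuous_on {0..1} ?h" using f g by (intro continuous_on_mult)
  obtain x1 where x1: "x1 \<in> col w k" "?h x1 = hi ?h w k" using lohi(2)[OF h assms(3,4)] by auto
  obtain x2 where x2: "x2 \<in> col w k" "?h x2 = lo ?h w k" using lohi(1)[OF h assms(3,4)] by auto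
  have c: "col w k \<subseteq> {0..1}" using col_basic(3)[OF assms(3,4)] .
  have fx: "lo f w k \<le> f x1 \<and> f x1 \<le> hi f w k" "lo f w k \<le> f x2 \<and> f x2 \<le> hi f w k"
    using lohi(3)[OF f assms(3,4)] x1 x2 by blast+
  have gx: "lo g w k \<le> g x1 \<and> g x1 \<le> hi g w k" "lo g w k \<le> g x2 \<and> g x2 \<le> hi g w k"
    using lohi(3)[OF g assms(3,4)] x1 x2 by blast+
  have b1: "\<bar>f x1\<bar> \<le> M" "\<bar>g x2\<bar> \<le> M" using Mf Mg x1 x2 c by auto
  have d1: "\<bar>g x1 - g x2\<bar> \<le> hi g w k - lo g w k" using gx by linarith
  have d2: "\<bar>f x1 - f x2\<bar> \<le> hi f w k - lo f w k" using fx by linarith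
  have A: "\<bar>f x1 * (g x1 - g x2)\<bar> \<le> M * (hi g w k - lo g w k)"
    unfolding abs_mult by (rule mult_mono[OF b1(1) d1]) (use b1 in auto)
  have B: "\<bar>g x2 * (f x1 - f x2)\<bar> \<le> M * (hi f w k - lo f w k)"
    unfolding abs_mult by (rule mult_mono[OF b1(2) d2]) (use b1 in auto)
  have "hi ?h w k - lo ?h w k = g x2 * (f x1 - f x2) + f x1 * (g x1 - g x2)"
  proof -
    have "f x1 * g x1 - f x2 * g x2 = g x2 * (f x1 - f x2) + f x1 * (g x1 - g x2)"
      by (simp add: algebra_simps)
    then show ?thesis using x1(2) x2(2) by simp
  qed
  also have "\<dots> \<le> \<bar>g x2 * (f x1 - f x2)\<bar> + \<bar>f x1 * (g x1 - g x2)\<bar>"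
    by (intro add_mono abs_ge_self)
  also have "\<dots> \<le> M * (hi f w k - lo f w k) + M * (hi g w k - lo g w k)"
    using A B by (rule add_mono[rotated])
  finally show ?thesis .
qed

lemma gen4: "(c::real) * (4 * a + 4 * b) = (4 * c) * (a + b)"
  by (simp add: algebra_simps)

lemma key:
  fixes f g :: "real \<Rightarrow> real"
  assumes f: "continuous_on {0..1} f" and g: "continuous_on {0..1} g" and "0 < \<delta>" "0 \<le> M"
    and Mf: "\<forall>x\<in>{0..1}. \<bar>f x\<bar> \<le> M" and Mg: "\<forall>x\<in>{0..1}. \<bar>g x\<bar> \<le> M"
  shows "real (cover_num \<delta> (graph01 (\<lambda>x. f x * g x)))
           \<le> (4 * (4 * M + 1)) * (real (cover_num \<delta> (graph01 f)) + real (cover_num \<delta> (graph01 g)))"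
proof -
  let ?h = "\<lambda>x. f x * g x"
  define w where "w = \<delta> / 2"
  define m where "m = nat \<lceil>1 / w\<rceil>"
  have w: "0 < w" "2 * w \<le> \<delta>" "\<delta> < 3 * w" using assms(3) unfolding w_def by auto
  have h: "continuous_on {0..1} ?h" using f g by (intro continuous_on_mult)
  define Af where "Af k = nat \<lfloor>(hi f w k - lo f w k) / (4 * w)\<rfloor> + 1" for k
  define Ag where "Ag k = nat \<lfloor>(hi g w k - lo g w k) / (4 * w)\<rfloor> + 1" for k
  define Bh where "Bh k = nat \<lfloor>(hi ?h w k - lo ?h w k) / w\<rfloor> + 1" for k
  have "cover_num \<delta> (graph01 ?h) \<le> (\<Sum>k<m. Bh k)"
    unfolding Bh_def m_def by (intro cover_num_le upper_cov h w)
  then have Nh: "real (cover_num \<delta> (graph01 ?h)) \<le> (\<Sum>k<m. real (Bh k))"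
    by (metis of_nat_le_iff of_nat_sum)
  have "(\<Sum>k<m. Af k) \<le> 4 * cover_num \<delta> (graph01 f)"
    unfolding Af_def m_def
    using lower_cov4[OF f w(1) w(3) cov_cover_num[OF upper_cov[OF f w(1,2)]]] by simp
  then have Nf: "(\<Sum>k<m. real (Af k)) \<le> 4 * real (cover_num \<delta> (graph01 f))"
    by (metis of_nat_le_iff of_nat_sum of_nat_mult of_nat_numeral)
  have "(\<Sum>k<m. Ag k) \<le> 4 * cover_num \<delta> (graph01 g)"
    unfolding Ag_def m_def
    using lower_cov4[OF g w(1) w(3) cov_cover_num[OF upper_cov[OF g w(1,2)]]] by simp
  then have Ng: "(\<Sum>k<m. real (Ag k)) \<le> 4 * real (cover_num \<delta> (graph01 g))"
    by (metis of_nat_le_iff of_nat_sum of_nat_mult of_nat_numeral)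
  have per: "real (Bh k) \<le> (4 * M + 1) * (real (Af k) + real (Ag k))" if "k < m" for k
  proof -
    have km: "k < nat \<lceil>1 / w\<rceil>" using that unfolding m_def .
    let ?of = "hi f w k - lo f w k" and ?og = "hi g w k - lo g w k" and ?oh = "hi ?h w k - lo ?h w k"
    have o: "0 \<le> ?of" "0 \<le> ?og" "0 \<le> ?oh" using osc_nonneg[OF _ w(1) km] f g h by auto
    have ohb: "?oh \<le> M * ?of + M * ?og" using osc_prod[OF f g w(1) km Mf Mg] .
    have "0 \<le> ?oh / w" using o w by simp
    then have b1: "real (Bh k) \<le> ?oh / w + 1" unfolding Bh_def by linarith
    have "?of / (4 * w) < real (Af k)" unfolding Af_def using o w by linarith
    then have af: "?of / w < 4 * real (Af k)" using w by (simp add: field_simps)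
    have "?og / (4 * w) < real (Ag k)" unfolding Ag_def using o w by linarith
    then have ag: "?og / w < 4 * real (Ag k)" using w by (simp add: field_simps)
    have "?oh / w \<le> (M * ?of + M * ?og) / w"
      using ohb w by (intro divide_right_mono) auto
    also have "\<dots> = M * (?of / w) + M * (?og / w)" by (simp add: add_divide_distrib)
    also have "\<dots> \<le> M * (4 * real (Af k)) + M * (4 * real (Ag k))"
      using af ag assms(4) by (intro add_mono mult_left_mono) auto
    finally have "real (Bh k) \<le> 4 * M * (real (Af k) + real (Ag k)) + 1"
      using b1 by (simp add: algebra_simps)
    moreover have "1 \<le> real (Af k) + real (Ag k)" unfolding Af_def by simp
    ultimately show ?thesis by (simp add: algebra_simps)
  qed
  have "real (cover_num \<delta> (graph01 ?h)) \<le> (\<Sum>k<m. (4 * M + 1) * (real (Af k) + real (Ag k)))"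
    using Nh per by (meson order_trans sum_mono lessThan_iff)
  also have "\<dots> = (4 * M + 1) * ((\<Sum>k<m. real (Af k)) + (\<Sum>k<m. real (Ag k)))"
    by (simp only: sum.distrib[symmetric] sum_distrib_left)
  also have "\<dots> \<le> (4 * M + 1) * (4 * real (cover_num \<delta> (graph01 f)) + 4 * real (cover_num \<delta> (graph01 g)))"
    using Nf Ng assms(4) by (intro mult_left_mono add_mono) auto
  also have "\<dots> = (4 * (4 * M + 1)) * (real (cover_num \<delta> (graph01 f)) + real (cover_num \<delta> (graph01 g)))"
    by (rule gen4)
  finally show ?thesis .
qed



lemma ev01: "eventually (\<lambda>\<delta>. 0 < \<delta> \<and> \<delta> < 1) (at_right (0::real))"
  by (rule eventually_at_rightI[of 0 1]) auto

lemma liminf_combine: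
  fixes rh rf rg e :: "real \<Rightarrow> real"
  assumes ev: "\<forall>\<^sub>F \<delta> in at_right 0. rh \<delta> \<le> e \<delta> + max (rf \<delta>) (rg \<delta>)"
    and e: "(e \<longlongrightarrow> 0) (at_right 0)"
  shows "Liminf (at_right 0) (\<lambda>\<delta>. ereal (rh \<delta>))
     \<le> max (Liminf (at_right 0) (\<lambda>\<delta>. ereal (rf \<delta>))) (Limsup (at_right 0) (\<lambda>\<delta>. ereal (rg \<delta>)))"
    (is "?H \<le> max ?F ?G")
proof (rule ccontr)
  assume "\<not> ?H \<le> max ?F ?G"
  then have "max ?F ?G < ?H" by (rule not_le_imp_less)
  then obtain z where z: "max ?F ?G < ereal z" "ereal z < ?H" using ereal_dense2 by blast
  then obtain z2 where z2: "max ?F ?G < ereal z2" "ereal z2 < ereal z" using ereal_dense2 by blast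
  have zz: "z2 < z" using z2(2) by simp
  have e1: "\<forall>\<^sub>F \<delta> in at_right 0. ereal z < ereal (rh \<delta>)" using less_LiminfD[OF z(2)] .
  have e2: "\<forall>\<^sub>F \<delta> in at_right 0. ereal (rg \<delta>) < ereal z2"
    using Limsup_lessD[of "at_right 0" "\<lambda>\<delta>. ereal (rg \<delta>)" "ereal z2"] z2(1) by simp
  have e3: "\<forall>\<^sub>F \<delta> in at_right 0. dist (e \<delta>) 0 < z - z2" using tendstoD[OF e] zz by simp
  have "\<forall>\<^sub>F \<delta> in at_right 0. ereal z2 \<le> ereal (rf \<delta>)"
    using e1 e2 e3 ev
  proof eventually_elim
    case (elim \<delta>)
    show ?case
    proof (rule ccontr)
      assume "\<not> ereal z2 \<le> ereal (rf \<delta>)"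
      then have "rf \<delta> < z2" by simp
      moreover have "rg \<delta> < z2" "z < rh \<delta>" "\<bar>e \<delta>\<bar> < z - z2" using elim by (auto simp: dist_real_def)
      ultimately show False using elim(4) by (auto simp: max_def split: if_splits)
    qed
  qed
  then have "ereal z2 \<le> ?F" by (rule Liminf_bounded)
  moreover have "?F < ereal z2" using z2(1) by simp
  ultimately show False by (simp add: leD)
qed

lemma e_tendsto: "((\<lambda>\<delta>. K / (- ln \<delta>)) \<longlongrightarrow> 0) (at_right (0::real))"
proof (rule tendsto_divide_0)
  show "((\<lambda>\<delta>. K) \<longlongrightarrow> K) (at_right 0)" by simp
  have "filterlim (\<lambda>\<delta>::real. - ln \<delta>) at_top (at_right 0)"
    using ln_at_0 filterlim_uminus_at_top by (metis filterlim_compose filterlim_uminus_at_top_at_bot)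
  then show "filterlim (\<lambda>\<delta>::real. - ln \<delta>) at_infinity (at_right 0)"
    by (rule filterlim_at_top_imp_at_infinity)
qed



lemma ratio_ineq:
  fixes a b c C L :: real
  assumes "0 < L" "1 \<le> a" "1 \<le> b" "1 \<le> c" "0 < C" "c \<le> C * (a + b)"
  shows "ln c / L \<le> ln (2 * C) / L + max (ln a / L) (ln b / L)"
proof -
  have "C * (a + b) \<le> (2 * C) * max a b" using assms by (simp add: max_def)
  then have "c \<le> (2 * C) * max a b" using assms(6) by linarith
  then have "ln c \<le> ln ((2 * C) * max a b)" using assms by (subst ln_le_cancel_iff) auto
  also have "\<dots> = ln (2 * C) + ln (max a b)" using assms by (subst ln_mult) auto
  also have "ln (max a b) = max (ln a) (ln b)" using assms by (auto simp: max_def)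
  finally have "ln c \<le> ln (2 * C) + max (ln a) (ln b)" .
  then have "ln c / L \<le> (ln (2 * C) + max (ln a) (ln b)) / L" using assms(1) by (intro divide_right_mono) auto
  also have "\<dots> = ln (2 * C) / L + max (ln a) (ln b) / L" by (simp add: add_divide_distrib)
  also have "max (ln a) (ln b) / L = max (ln a / L) (ln b / L)" using assms(1) by (auto simp: max_def divide_right_mono divide_le_cancel)
  finally show ?thesis .
qed

lemma graph_cov_pos:
  assumes "continuous_on {0..1} \<phi>" "0 < \<delta>"
  shows "1 \<le> cover_num \<delta> (graph01 \<phi>)"
proof -
  have "(0, \<phi> 0) \<in> graph01 \<phi>" unfolding graph01_def by auto
  then show ?thesis using assms(2) by (intro cover_num_pos[OF upper_cov[OF assms(1), of "\<delta>/2" \<delta>]]) auto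
qed

lemma bound_on:
  assumes "continuous_on {0..1} (\<phi>::real \<Rightarrow> real)"
  shows "\<exists>B. \<forall>x\<in>{0..1}. \<bar>\<phi> x\<bar> \<le> B"
proof -
  have "bounded (\<phi> ` {0..1})" by (intro compact_imp_bounded compact_continuous_image assms) auto
  then show ?thesis unfolding bounded_real by auto
qed

theorem proposition3p6:
  fixes f g :: "real \<Rightarrow> real"
  assumes "continuous_on {0..1} f" and "continuous_on {0..1} g"
  shows "lower_box_dim (graph01 (\<lambda>x. f x * g x))
           \<le> max (lower_box_dim (graph01 f)) (upper_box_dim (graph01 g))"
proof -
  obtain Bf where Bf: "\<forall>x\<in>{0..1}. \<bar>f x\<bar> \<le> Bf" using bound_on[OF assms(1)] by blast
  obtain Bg where Bg: "\<forall>x\<in>{0..1}. \<bar>g x\<bar> \<le> Bg" using bound_on[OF assms(2)] by blast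
  define M where "M = max 0 (max Bf Bg)"
  have M: "0 \<le> M" "\<forall>x\<in>{0..1}. \<bar>f x\<bar> \<le> M" "\<forall>x\<in>{0..1}. \<bar>g x\<bar> \<le> M"
    using Bf Bg unfolding M_def by force+
  define C where "C = 4 * (4 * M + 1)"
  have C: "0 < C" unfolding C_def using M(1) by simp
  have h: "continuous_on {0..1} (\<lambda>x. f x * g x)" using assms by (intro continuous_on_mult)
  let ?r = "\<lambda>\<phi> \<delta>. ln (real (cover_num \<delta> (graph01 \<phi>))) / - ln \<delta>"
  have ev: "\<forall>\<^sub>F \<delta> in at_right 0. ?r (\<lambda>x. f x * g x) \<delta> \<le> ln (2 * C) / (- ln \<delta>) + max (?r f \<delta>) (?r g \<delta>)"
    using ev01
  proof eventually_elim
    case (elim \<delta>)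
    then have L: "0 < - ln \<delta>" by simp
    show ?case
      by (rule ratio_ineq[OF L _ _ _ C])
        (use graph_cov_pos[OF assms(1)] graph_cov_pos[OF assms(2)] graph_cov_pos[OF h] elim
             key[OF assms(1,2) _ M, of \<delta>] in \<open>auto simp: C_def\<close>)
  qed
  show ?thesis unfolding lower_box_dim_def upper_box_dim_def
    by (rule liminf_combine[OF ev e_tendsto])
qed

end
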